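(* Let $\Omega\subset\mathbb{R}^n$ ($n\ge1$) be a bounded domain, $T>0$, $\delta\in(0,1)\cup(1,2)$, $\bar Q:=\bar\Omega\times[0,T]$ and $Q:=\Omega\times(0,T]$. Let $u$ be a classical solution of the initial-boundary value problem described in the context, and suppose $u\in C^{2,\bar\delta}(\bar Q)$. Then the initial value $\phi_0$ satisfies $L_0\phi_0(x)=f(x,0)$ for all $x\in\Omega$, where \[ L_0w(x):=-\sum_{i,j=1}^n p_{ij}(x,0)\frac{\partial^2 w}{\partial x_i\partial x_j}(x)+\sum_{i=1}^n q_i(x,0)\frac{\partial w}{\partial x_i}(x)+r(x,0)w(x). \]
   Context: Set $\bar\delta=1$ if $0<\delta<1$ and $\bar\delta=2$ if $1<\delta<2$. The Caputo fractional derivative is \[ D_t^\delta g(x,t):=\frac{1}{\Gamma(\bar\delta-\delta)}\int_0^t (t-s)^{\bar\delta-\delta-1}\,\frac{\partial^{\bar\delta}g(x,s)}{\partial s^{\bar\delta}}\,ds,\qquad x\in\Omega,\ 0<t\le T. \] The problem is: $D_t^\delta u-\sum_{i,j=1}^n p_{ij}(x,t)\,\partial^2u/\partial x_i\partial x_j+\sum_{i=1}^n q_i(x,t)\,\partial u/\partial x_i+r(x,t)u=f(x,t)$ for $(x,t)\in Q$; $u(x,t)=\psi(x,t)$ for $(x,t)\in\partial\Omega\times(0,T]$; $u(x,0)=\phi_0(x)$ for $x\in\bar\Omega$; and, only when $1<\delta<2$, $u_t(x,0)=\phi_1(x)$ for $x\in\Omega$. The spatial operator is uniformly elliptic on $Q$;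 $p_{ij},q_i,r,\psi,\phi_0,\phi_1$ are continuous on the closures of their domains; $f$ is continuous on $\bar Q$; and $\phi_0(x)=\psi(x,0)$ for all $x\in\partial\Omega$. A classical solution is a function $u$ continuous on $\bar Q$ for which $D_t^\delta u$, $\partial u/\partial x_i$, $\partial^2u/\partial x_i\partial x_j$ exist at every point of $Q$ and the equation and conditions hold pointwise. $C^{2,\bar\delta}(\bar Q)$ denotes the set of $w\in C(\bar Q)$ such that $\partial w/\partial x_i$, $\partial^2w/\partial x_i\partial x_j$ ($1\le i,j\le n$) and $\partial^k w/\partial t^k$ for $k=1,\bar\delta$ all lie in $C(\bar Q)$. *)

theory Defs
  imports "HOL-Analysis.Analysis"
begin

text \<open>Order of the classical derivative inside the Caputo derivative:
  1 if 0 < delta < 1, 2 if 1 < delta < 2.\<close>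
definition dbar :: "real \<Rightarrow> nat" where
  "dbar \<delta> = (if \<delta> < 1 then 1 else 2)"

definition has_partial :: "(real^'n \<Rightarrow> real) \<Rightarrow> 'n \<Rightarrow> real^'n \<Rightarrow> real \<Rightarrow> bool" where
  "has_partial w i x D \<longleftrightarrow> ((\<lambda>h. w (x + h *\<^sub>R axis i 1)) has_real_derivative D) (at 0)"

text \<open>Caputo derivative of order delta of g (function of time) at t exists and equals D:
  D = 1/Gamma(dbar-delta) * integral_0^t (t-s)^(dbar-delta-1) g^{(dbar)}(s) ds,
  the integral existing and the classical derivative g^{(dbar)} existing on (0,t).\<close>
definition has_caputo :: "real \<Rightarrow> (real \<Rightarrow> real) \<Rightarrow> real \<Rightarrow> real \<Rightarrow> bool" where
  "has_caputo \<delta> g t D \<longleftrightarrow>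
     (\<exists>dg. (if dbar \<delta> = 1
             then (\<forall>s\<in>{0<..<t}. (g has_real_derivative dg s) (at s))
             else (\<exists>g1. \<forall>s\<in>{0<..<t}. (g has_real_derivative g1 s) (at s) \<and>
                                       (g1 has_real_derivative dg s) (at s)))
         \<and> ((\<lambda>s. (t - s) powr (real (dbar \<delta>) - \<delta> - 1) * dg s)
               has_integral (Gamma (real (dbar \<delta>) - \<delta>) * D)) {0..t})"

definition spatial_op ::
  "('n \<Rightarrow> 'n \<Rightarrow> real^'n \<Rightarrow> real \<Rightarrow> real) \<Rightarrow> ('n \<Rightarrow> real^'n \<Rightarrow> real \<Rightarrow> real) \<Rightarrow>
   (real^'n \<Rightarrow> real \<Rightarrow> real) \<Rightarrow> real^'n \<Rightarrow> real \<Rightarrow>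
   ('n \<Rightarrow> 'n \<Rightarrow> real) \<Rightarrow> ('n \<Rightarrow> real) \<Rightarrow> real \<Rightarrow> real" where
  "spatial_op p q r x t Wxx Wx W =
     - (\<Sum>i\<in>UNIV. \<Sum>j\<in>UNIV. p i j x t * Wxx i j) + (\<Sum>i\<in>UNIV. q i x t * Wx i) + r x t * W"

definition cylQ :: "(real^'n) set \<Rightarrow> real \<Rightarrow> ((real^'n) \<times> real) set" where
  "cylQ \<Omega> T = \<Omega> \<times> {0<..T}"

definition cylQbar :: "(real^'n) set \<Rightarrow> real \<Rightarrow> ((real^'n) \<times> real) set" where
  "cylQbar \<Omega> T = closure \<Omega> \<times> {0..T}"

definition classical_solution ::
  "(real^'n) set \<Rightarrow> real \<Rightarrow> real \<Rightarrow>
   ('n \<Rightarrow> 'n \<Rightarrow> real^'n \<Rightarrow> real \<Rightarrow> real) \<Rightarrow> ('n \<Rightarrow> real^'n \<Rightarrow> real \<Rightarrow> real) \<Rightarrow>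
   (real^'n \<Rightarrow> real \<Rightarrow> real) \<Rightarrow> (real^'n \<Rightarrow> real \<Rightarrow> real) \<Rightarrow> (real^'n \<Rightarrow> real \<Rightarrow> real) \<Rightarrow>
   (real^'n \<Rightarrow> real) \<Rightarrow> (real^'n \<Rightarrow> real) \<Rightarrow> (real^'n \<Rightarrow> real \<Rightarrow> real) \<Rightarrow> bool" where
  "classical_solution \<Omega> T \<delta> p q r f \<psi> \<phi>0 \<phi>1 u \<longleftrightarrow>
     continuous_on (cylQbar \<Omega> T) (\<lambda>(x, t). u x t) \<and>
     (\<exists>Ux Uxx. \<forall>(x, t)\<in>cylQ \<Omega> T.
        (\<forall>i. has_partial (\<lambda>y. u y t) i x (Ux i x t)) \<and>
        (\<forall>i j. has_partial (\<lambda>y. Ux j y t) i x (Uxx i j x t)) \<and>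
        (\<exists>D. has_caputo \<delta> (\<lambda>s. u x s) t D \<and>
             D + spatial_op p q r x t (\<lambda>i j. Uxx i j x t) (\<lambda>i. Ux i x t) (u x t) = f x t)) \<and>
     (\<forall>x\<in>frontier \<Omega>. \<forall>t\<in>{0<..T}. u x t = \<psi> x t) \<and>
     (\<forall>x\<in>closure \<Omega>. u x 0 = \<phi>0 x) \<and>
     (1 < \<delta> \<longrightarrow> (\<forall>x\<in>\<Omega>. ((\<lambda>s. u x s) has_real_derivative \<phi>1 x) (at 0 within {0..T})))"

definition C2dbar :: "real \<Rightarrow> (real^'n) set \<Rightarrow> real \<Rightarrow> (real^'n \<Rightarrow> real \<Rightarrow> real) \<Rightarrow> bool" where
  "C2dbar \<delta> \<Omega> T u \<longleftrightarrow>
     continuous_on (cylQbar \<Omega> T) (\<lambda>(x, t). u x t) \<and>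
     (\<exists>Ux Uxx Ut Utt.
        (\<forall>i. continuous_on (cylQbar \<Omega> T) (\<lambda>(x, t). Ux i x t)) \<and>
        (\<forall>i j. continuous_on (cylQbar \<Omega> T) (\<lambda>(x, t). Uxx i j x t)) \<and>
        continuous_on (cylQbar \<Omega> T) (\<lambda>(x, t). Ut x t) \<and>
        (dbar \<delta> = 2 \<longrightarrow> continuous_on (cylQbar \<Omega> T) (\<lambda>(x, t). Utt x t)) \<and>
        (\<forall>(x, t)\<in>cylQ \<Omega> T.
           (\<forall>i. has_partial (\<lambda>y. u y t) i x (Ux i x t)) \<and>
           (\<forall>i j. has_partial (\<lambda>y. Ux j y t) i x (Uxx i j x t)) \<and>
           ((\<lambda>s. u x s) has_real_derivative Ut x t) (at t within {0..T}) \<and>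
           (dbar \<delta> = 2 \<longrightarrow> ((\<lambda>s. Ut x s) has_real_derivative Utt x t) (at t within {0..T}))))"

end

theory Submission imports Defs begin


lemma cyl_tendsto:
  assumes c: "continuous_on (cylQbar \<Omega> T) (\<lambda>(x,t). F x t)" and x: "x \<in> closure \<Omega>" and T: "T > 0"
  shows "((\<lambda>t. F x t) \<longlongrightarrow> F x 0) (at_right 0)"
proof -
  have "continuous_on {0..T} (\<lambda>t. (\<lambda>(x,t). F x t) (x,t))"
    by (rule continuous_on_compose2[OF c]) (use x in \<open>auto simp: cylQbar_def intro!: continuous_intros\<close>)
  hence "((\<lambda>t. F x t) \<longlongrightarrow> F x 0) (at 0 within {0..T})" using T by (auto simp: continuous_on_def)
  thus ?thesis using at_within_Icc_at_right[OF T] by simp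
qed

lemma partial_unique: "has_partial w i x D1 \<Longrightarrow> has_partial w i x D2 \<Longrightarrow> D1 = D2"
  unfolding has_partial_def by (rule DERIV_unique)

lemma has_partial_local:
  fixes w1 w2 :: "real^'n \<Rightarrow> real"
  assumes "open \<Omega>" "x \<in> \<Omega>" "\<And>y. y \<in> \<Omega> \<Longrightarrow> w1 y = w2 y" "has_partial w1 i x D"
  shows "has_partial w2 i x D"
proof -
  obtain e where e: "e>0" "ball x e \<subseteq> \<Omega>" using assms open_contains_ball by blast
  have "x + h *\<^sub>R axis i 1 \<in> \<Omega>" if "h \<in> ball 0 e" for h :: real
  proof -
    have "dist x (x + h *\<^sub>R axis i 1) < e" using that by (simp add: dist_norm norm_axis_1)
    thus ?thesis using e by auto
  qed
  note inO = this
  show ?thesis unfolding has_partial_def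
  proof (rule has_field_derivative_transform_within_open[where S="ball 0 e"])
    show "((\<lambda>h. w1 (x + h *\<^sub>R axis i 1)) has_real_derivative D) (at 0)"
      using assms(4) by (simp add: has_partial_def)
    show "open (ball (0::real) e)" by simp
    show "(0::real) \<in> ball 0 e" using e by simp
    fix h :: real assume "h \<in> ball 0 e"
    thus "w1 (x + h *\<^sub>R axis i 1) = w2 (x + h *\<^sub>R axis i 1)" using assms(3) inO by blast
  qed
qed

lemma caputo_core:
  fixes a t M D :: real and dg :: "real \<Rightarrow> real"
  assumes a: "0 < a" and t: "0 < t" and M: "0 \<le> M"
   and hi: "((\<lambda>s. (t - s) powr (a - 1) * dg s) has_integral (Gamma a * D)) {0..t}"
   and b: "\<And>s. s \<in> {0<..<t} \<Longrightarrow> \<bar>dg s\<bar> \<le> M"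
  shows "\<bar>D\<bar> \<le> M / (a * Gamma a) * t powr a"
proof -
  have k0: "((\<lambda>s. (t - s) powr (a - 1)) has_integral ((\<lambda>s. - ((t - s) powr a / a)) t - (\<lambda>s. - ((t - s) powr a / a)) 0)) {0..t}"
  proof (rule fundamental_theorem_of_calculus_interior)
    show "0 \<le> t" using t by simp
    show "continuous_on {0..t} (\<lambda>s. - ((t - s) powr a / a))"
      by (intro continuous_intros continuous_on_powr') (use a in auto)
    fix s assume s: "s \<in> {0<..<t}"
    have "((\<lambda>s. (t - s) powr a) has_real_derivative (t - s) powr a * (0 * ln (t - s) + (-1) * a / (t - s))) (at s)"
      by (rule DERIV_powr) (use s in \<open>auto intro!: derivative_eq_intros\<close>)
    moreover have "(t - s) powr a * (0 * ln (t - s) + (-1) * a / (t - s)) = - (a * (t - s) powr (a - 1))"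
      using s by (simp add: powr_diff field_simps)
    ultimately have "((\<lambda>s. - ((t - s) powr a / a)) has_real_derivative (t - s) powr (a - 1)) (at s)"
      using a s by (auto intro!: derivative_eq_intros)
    thus "((\<lambda>s. - ((t - s) powr a / a)) has_vector_derivative (t - s) powr (a - 1)) (at s)"
      by (simp add: has_real_derivative_iff_has_vector_derivative)
  qed
  have k: "((\<lambda>s. M * (t - s) powr (a - 1)) has_integral M * (t powr a / a)) {0..t}"
    using has_integral_mult_right[OF k0, of M] a by simp
  define dg' where "dg' s = (if s \<in> {0<..<t} then dg s else 0)" for s
  have hi': "((\<lambda>s. (t - s) powr (a - 1) * dg' s) has_integral (Gamma a * D)) {0..t}"
    using hi has_integral_spike_finite_eq[of "{0,t}" "{0..t}" "\<lambda>s. (t - s) powr (a - 1) * dg' s" "\<lambda>s. (t - s) powr (a - 1) * dg s"]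
    by (auto simp: dg'_def)
  have "norm (integral {0..t} (\<lambda>s. (t - s) powr (a - 1) * dg' s)) \<le> integral {0..t} (\<lambda>s. M * (t - s) powr (a - 1))"
  proof (rule integral_norm_bound_integral)
    show "(\<lambda>s. (t - s) powr (a - 1) * dg' s) integrable_on {0..t}" using hi' by blast
    show "(\<lambda>s. M * (t - s) powr (a - 1)) integrable_on {0..t}" using k by blast
    fix s assume "s \<in> {0..t}"
    have "\<bar>dg' s\<bar> \<le> M" using b M by (auto simp: dg'_def)
    thus "norm ((t - s) powr (a - 1) * dg' s) \<le> M * (t - s) powr (a - 1)"
    proof -
      have "(t - s) powr (a - 1) * \<bar>dg' s\<bar> \<le> (t - s) powr (a - 1) * M"
        by (rule mult_left_mono) (use \<open>\<bar>dg' s\<bar> \<le> M\<close> in auto)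
      thus ?thesis by (simp add: abs_mult algebra_simps)
    qed
  qed
  hence "\<bar>Gamma a * D\<bar> \<le> M * (t powr a / a)"
    using integral_unique[OF hi'] integral_unique[OF k] by simp
  hence "Gamma a * \<bar>D\<bar> \<le> M * (t powr a / a)" using Gamma_real_pos[OF a] by (simp add: abs_mult)
  thus ?thesis using Gamma_real_pos[OF a] a by (simp add: field_simps)
qed

lemma partial_limit:
  fixes g G :: "real^'n \<Rightarrow> real \<Rightarrow> real"
  assumes op: "open \<Omega>" and x: "x \<in> \<Omega>" and T: "T > 0"
   and cg: "continuous_on (cylQbar \<Omega> T) (\<lambda>(y,t). g y t)"
   and cG: "continuous_on (cylQbar \<Omega> T) (\<lambda>(y,t). G y t)"
   and pd: "\<And>y t. y\<in>\<Omega> \<Longrightarrow> t\<in>{0<..T} \<Longrightarrow> has_partial (\<lambda>y. g y t) i y (G y t)"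
  shows "has_partial (\<lambda>y. g y 0) i x (G x 0)"
proof -
  define v where "v = (axis i 1 :: real^'n)"
  have nv: "norm v = 1" by (simp add: v_def norm_axis_1)
  obtain e where e: "e>0" "ball x e \<subseteq> \<Omega>" using op x open_contains_ball by blast
  have inO: "x + s *\<^sub>R v \<in> \<Omega>" if "\<bar>s\<bar> < e" for s
  proof -
    have "dist x (x + s *\<^sub>R v) < e" using that nv by (simp add: dist_norm)
    thus ?thesis using e by auto
  qed
  have der: "((\<lambda>s. g (x + s *\<^sub>R v) t) has_real_derivative G (x + s *\<^sub>R v) t) (at s)"
    if "\<bar>s\<bar> < e" "t \<in> {0<..T}" for s t
  proof -
    have "((\<lambda>k. g (x + s *\<^sub>R v + k *\<^sub>R v) t) has_real_derivative G (x + s *\<^sub>R v) t) (at 0)"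
      using pd[OF inO[OF that(1)] that(2)] by (simp add: has_partial_def v_def)
    hence "((\<lambda>k. g (x + (k + s) *\<^sub>R v) t) has_real_derivative G (x + s *\<^sub>R v) t) (at 0)"
      by (simp add: scaleR_add_left algebra_simps)
    thus ?thesis using DERIV_shift[of "\<lambda>s. g (x + s *\<^sub>R v) t" _ 0 s] by simp
  qed
  have mvt: "\<exists>z. \<bar>z\<bar> \<le> \<bar>h\<bar> \<and> g (x + h *\<^sub>R v) t - g x t = h * G (x + z *\<^sub>R v) t"
    if "\<bar>h\<bar> < e" "h \<noteq> 0" "t \<in> {0<..T}" for h t
  proof (cases "h > 0")
    case True
    have "\<exists>z>0. z < h \<and> g (x + h *\<^sub>R v) t - g (x + 0 *\<^sub>R v) t = (h - 0) * G (x + z *\<^sub>R v) t"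
      by (rule MVT2[OF True]) (use der that in auto)
    then obtain z where z: "z > 0" "z < h" "g (x + h *\<^sub>R v) t - g (x + 0 *\<^sub>R v) t = (h - 0) * G (x + z *\<^sub>R v) t"
      by blast
    have "\<bar>z\<bar> \<le> \<bar>h\<bar>" using z by simp
    moreover have "g (x + h *\<^sub>R v) t - g x t = h * G (x + z *\<^sub>R v) t" using z(3) by simp
    ultimately show ?thesis by blast
  next
    case False
    hence h: "h < 0" using that by simp
    have "\<exists>z>h. z < 0 \<and> g (x + 0 *\<^sub>R v) t - g (x + h *\<^sub>R v) t = (0 - h) * G (x + z *\<^sub>R v) t"
      by (rule MVT2[OF h]) (use der that in auto)
    then obtain z where z: "z > h" "z < 0" "g (x + 0 *\<^sub>R v) t - g (x + h *\<^sub>R v) t = (0 - h) * G (x + z *\<^sub>R v) t"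
      by blast
    have "\<bar>z\<bar> \<le> \<bar>h\<bar>" using z by simp
    moreover have "g x t - g (x + h *\<^sub>R v) t = - (h * G (x + z *\<^sub>R v) t)" using z(3) by simp
    hence "g (x + h *\<^sub>R v) t - g x t = h * G (x + z *\<^sub>R v) t" by linarith
    ultimately show ?thesis by blast
  qed
  have x0: "(x,0) \<in> cylQbar \<Omega> T" using x T closure_subset by (auto simp: cylQbar_def)
  show ?thesis
    unfolding has_partial_def v_def[symmetric] has_field_derivative_iff LIM_eq
  proof (intro allI impI)
    fix r :: real assume r: "r > 0"
    have "\<exists>d>0. \<forall>p\<in>cylQbar \<Omega> T. dist p (x,0) < d \<longrightarrow> dist ((\<lambda>(y,t). G y t) p) ((\<lambda>(y,t). G y t) (x,0)) < r/2"
      using cG x0 r unfolding continuous_on_iff by (meson half_gt_zero)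
    then obtain d where d: "d > 0" and dd: "\<And>y t. (y,t) \<in> cylQbar \<Omega> T \<Longrightarrow> dist (y,t) (x,0) < d \<Longrightarrow> \<bar>G y t - G x 0\<bar> < r/2"
      by (force simp: dist_real_def)
    show "\<exists>s>0. \<forall>h. h \<noteq> 0 \<and> norm (h - 0) < s \<longrightarrow>
       norm ((g (x + h *\<^sub>R v) 0 - g (x + 0 *\<^sub>R v) 0) / (h - 0) - G x 0) < r"
    proof (intro exI[of _ "min e (d/2)"] conjI allI impI)
      show "0 < min e (d/2)" using e d by simp
      fix h :: real assume h: "h \<noteq> 0 \<and> norm (h - 0) < min e (d/2)"
      let ?q = "\<lambda>t. (g (x + h *\<^sub>R v) t - g x t) / h"
      have hx: "x + h *\<^sub>R v \<in> closure \<Omega>" using inO[of h] h closure_subset by auto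
      have lim: "(?q \<longlongrightarrow> ?q 0) (at_right 0)"
        by (intro tendsto_intros cyl_tendsto[OF cg hx T] cyl_tendsto[OF cg _ T]) (use x closure_subset h in auto)
      have "eventually (\<lambda>t. t \<in> {0<..<min T (d/2)}) (at_right 0)"
        unfolding eventually_at_right_field using T d by (intro exI[of _ "min T (d/2)"]) auto
      hence ev: "eventually (\<lambda>t. \<bar>?q t - G x 0\<bar> \<le> r/2) (at_right (0::real))"
      proof (rule eventually_mono)
        fix t assume t: "t \<in> {0<..<min T (d/2)}"
        obtain z where z: "\<bar>z\<bar> \<le> \<bar>h\<bar>" "g (x + h *\<^sub>R v) t - g x t = h * G (x + z *\<^sub>R v) t"
          using mvt[of h t] h t by auto
        have qt: "?q t = G (x + z *\<^sub>R v) t" using z h by simp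
        have "dist (x + z *\<^sub>R v, t) (x, 0) \<le> \<bar>z\<bar> + \<bar>t\<bar>"
          unfolding dist_Pair_Pair using sqrt_sum_squares_le_sum_abs[of "dist (x + z *\<^sub>R v) x" "dist t 0"]
          by (simp add: dist_norm nv)
        also have "\<dots> < d" using z h t by auto
        finally have "dist (x + z *\<^sub>R v, t) (x, 0) < d" .
        moreover have "(x + z *\<^sub>R v, t) \<in> cylQbar \<Omega> T"
          using inO[of z] z h t closure_subset by (auto simp: cylQbar_def)
        ultimately show "\<bar>?q t - G x 0\<bar> \<le> r/2" using dd qt by fastforce
      qed
      have "\<bar>?q 0 - G x 0\<bar> \<le> r/2"
        by (rule tendsto_upperbound[OF tendsto_rabs[OF tendsto_diff[OF lim tendsto_const]] ev]) simp
      thus "norm ((g (x + h *\<^sub>R v) 0 - g (x + 0 *\<^sub>R v) 0) / (h - 0) - G x 0) < r"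
        using r by simp
    qed
  qed
qed

theorem theorem2p3:
  fixes \<Omega> :: "(real^'n) set" and T \<delta> :: real
    and p :: "'n \<Rightarrow> 'n \<Rightarrow> real^'n \<Rightarrow> real \<Rightarrow> real"
    and q :: "'n \<Rightarrow> real^'n \<Rightarrow> real \<Rightarrow> real"
    and r f \<psi> u :: "real^'n \<Rightarrow> real \<Rightarrow> real"
    and \<phi>0 \<phi>1 :: "real^'n \<Rightarrow> real"
  assumes dom: "open \<Omega>" "connected \<Omega>" "bounded \<Omega>" "\<Omega> \<noteq> {}"
    and T: "T > 0"
    and del: "(0 < \<delta> \<and> \<delta> < 1) \<or> (1 < \<delta> \<and> \<delta> < 2)"
    and ellip: "\<exists>c>0. \<forall>(x, t)\<in>cylQ \<Omega> T. \<forall>\<xi>::real^'n.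
                  (\<Sum>i\<in>UNIV. \<Sum>j\<in>UNIV. p i j x t * \<xi>$i * \<xi>$j) \<ge> c * (norm \<xi>)^2"
    and cp: "\<forall>i j. continuous_on (cylQbar \<Omega> T) (\<lambda>(x, t). p i j x t)"
    and cq: "\<forall>i. continuous_on (cylQbar \<Omega> T) (\<lambda>(x, t). q i x t)"
    and cr: "continuous_on (cylQbar \<Omega> T) (\<lambda>(x, t). r x t)"
    and cf: "continuous_on (cylQbar \<Omega> T) (\<lambda>(x, t). f x t)"
    and cpsi: "continuous_on (frontier \<Omega> \<times> {0..T}) (\<lambda>(x, t). \<psi> x t)"
    and cphi0: "continuous_on (closure \<Omega>) \<phi>0"
    and cphi1: "continuous_on (closure \<Omega>) \<phi>1"
    and compat: "\<forall>x\<in>frontier \<Omega>. \<phi>0 x = \<psi> x 0"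
    and sol: "classical_solution \<Omega> T \<delta> p q r f \<psi> \<phi>0 \<phi>1 u"
    and reg: "C2dbar \<delta> \<Omega> T u"
  shows "\<exists>Px Pxx. \<forall>x\<in>\<Omega>.
           (\<forall>i. has_partial \<phi>0 i x (Px i x)) \<and>
           (\<forall>i j. has_partial (Px j) i x (Pxx i j x)) \<and>
           spatial_op p q r x 0 (\<lambda>i j. Pxx i j x) (\<lambda>i. Px i x) (\<phi>0 x) = f x 0"
proof -
  obtain Ux Uxx where S: "\<forall>(x, t)\<in>cylQ \<Omega> T.
        (\<forall>i. has_partial (\<lambda>y. u y t) i x (Ux i x t)) \<and>
        (\<forall>i j. has_partial (\<lambda>y. Ux j y t) i x (Uxx i j x t)) \<and>
        (\<exists>D. has_caputo \<delta> (\<lambda>s. u x s) t D \<and>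
             D + spatial_op p q r x t (\<lambda>i j. Uxx i j x t) (\<lambda>i. Ux i x t) (u x t) = f x t)"
    using conjunct1[OF conjunct2[OF sol[unfolded classical_solution_def]]] by blast
  have phi0: "\<forall>x\<in>closure \<Omega>. u x 0 = \<phi>0 x"
    using conjunct1[OF conjunct2[OF conjunct2[OF conjunct2[OF sol[unfolded classical_solution_def]]]]] .
  have cu: "continuous_on (cylQbar \<Omega> T) (\<lambda>(x, t). u x t)" using reg by (simp add: C2dbar_def)
  obtain Rx Rxx Rt Rtt where
        cRx: "\<forall>i. continuous_on (cylQbar \<Omega> T) (\<lambda>(x, t). Rx i x t)" and
        cRxx: "\<forall>i j. continuous_on (cylQbar \<Omega> T) (\<lambda>(x, t). Rxx i j x t)" and
        cRt: "continuous_on (cylQbar \<Omega> T) (\<lambda>(x, t). Rt x t)" and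
        cRtt: "dbar \<delta> = 2 \<longrightarrow> continuous_on (cylQbar \<Omega> T) (\<lambda>(x, t). Rtt x t)" and
        R: "\<forall>(x, t)\<in>cylQ \<Omega> T.
           (\<forall>i. has_partial (\<lambda>y. u y t) i x (Rx i x t)) \<and>
           (\<forall>i j. has_partial (\<lambda>y. Rx j y t) i x (Rxx i j x t)) \<and>
           ((\<lambda>s. u x s) has_real_derivative Rt x t) (at t within {0..T}) \<and>
           (dbar \<delta> = 2 \<longrightarrow> ((\<lambda>s. Rt x s) has_real_derivative Rtt x t) (at t within {0..T}))"
    using conjunct2[OF reg[unfolded C2dbar_def]] by blast
  have inQ: "(y, t) \<in> cylQ \<Omega> T" if "y \<in> \<Omega>" "t \<in> {0<..T}" for y t
    using that by (simp add: cylQ_def)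
  have Sx: "(\<forall>i. has_partial (\<lambda>y. u y t) i y (Ux i y t)) \<and>
        (\<forall>i j. has_partial (\<lambda>y. Ux j y t) i y (Uxx i j y t)) \<and>
        (\<exists>D. has_caputo \<delta> (\<lambda>s. u y s) t D \<and>
             D + spatial_op p q r y t (\<lambda>i j. Uxx i j y t) (\<lambda>i. Ux i y t) (u y t) = f y t)"
    if "y \<in> \<Omega>" "t \<in> {0<..T}" for y t
    using bspec[OF S inQ[OF that]] by simp
  have Rx: "(\<forall>i. has_partial (\<lambda>y. u y t) i y (Rx i y t)) \<and>
           (\<forall>i j. has_partial (\<lambda>y. Rx j y t) i y (Rxx i j y t)) \<and>
           ((\<lambda>s. u y s) has_real_derivative Rt y t) (at t within {0..T}) \<and>
           (dbar \<delta> = 2 \<longrightarrow> ((\<lambda>s. Rt y s) has_real_derivative Rtt y t) (at t within {0..T}))"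
    if "y \<in> \<Omega>" "t \<in> {0<..T}" for y t
    using bspec[OF R inQ[OF that]] by simp
  define a where "a = real (dbar \<delta>) - \<delta>"
  have a: "0 < a" using del by (auto simp: a_def dbar_def)
  define Px where "Px i y = Rx i y 0" for i y
  define Pxx where "Pxx i j y = Rxx i j y 0" for i j y
  show ?thesis
  proof (intro exI[of _ Px] exI[of _ Pxx] ballI conjI allI)
    fix x assume x: "x \<in> \<Omega>"
    have xc: "x \<in> closure \<Omega>" using x closure_subset by auto
    show "has_partial \<phi>0 i x (Px i x)" for i
    proof -
      have "has_partial (\<lambda>y. u y 0) i x (Rx i x 0)"
        by (rule partial_limit[OF dom(1) x T cu cRx[rule_format]]) (use Rx in blast)
      thus ?thesis unfolding Px_def
        by (rule has_partial_local[OF dom(1) x, rotated]) (use phi0 closure_subset in auto)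
    qed
    show "has_partial (Px j) i x (Pxx i j x)" for i j
      unfolding Px_def Pxx_def
      by (rule partial_limit[OF dom(1) x T cRx[rule_format] cRxx[rule_format]]) (use Rx in blast)
    define Sr where "Sr t = spatial_op p q r x t (\<lambda>i j. Rxx i j x t) (\<lambda>i. Rx i x t) (u x t)" for t
    have Slim: "(Sr \<longlongrightarrow> Sr 0) (at_right 0)"
      unfolding Sr_def spatial_op_def
      by (intro tendsto_intros cyl_tendsto[OF cp[rule_format] xc T] cyl_tendsto[OF cq[rule_format] xc T]
          cyl_tendsto[OF cr xc T] cyl_tendsto[OF cRx[rule_format] xc T] cyl_tendsto[OF cRxx[rule_format] xc T]
          cyl_tendsto[OF cu xc T])
    have flim: "((\<lambda>t. f x t) \<longlongrightarrow> f x 0) (at_right 0)" by (rule cyl_tendsto[OF cf xc T])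
    define B where "B s = (if dbar \<delta> = 1 then Rt x s else Rtt x s)" for s
    have cB: "continuous_on {0..T} B"
    proof (cases "dbar \<delta> = 1")
      case True
      have "continuous_on {0..T} (\<lambda>s. (\<lambda>(x,t). Rt x t) (x,s))"
        by (rule continuous_on_compose2[OF cRt]) (use xc in \<open>auto simp: cylQbar_def intro!: continuous_intros\<close>)
      thus ?thesis using True by (simp add: B_def)
    next
      case False
      hence "dbar \<delta> = 2" by (simp add: dbar_def split: if_splits)
      hence "continuous_on {0..T} (\<lambda>s. (\<lambda>(x,t). Rtt x t) (x,s))"
        by (intro continuous_on_compose2[OF cRtt[rule_format]]) (use xc in \<open>auto simp: cylQbar_def intro!: continuous_intros\<close>)
      thus ?thesis using False by (simp add: B_def)
    qed
    have "bounded (B ` {0..T})" by (rule compact_imp_bounded[OF compact_continuous_image[OF cB compact_Icc]])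
    then obtain M where M: "M > 0" "\<And>s. s \<in> {0..T} \<Longrightarrow> \<bar>B s\<bar> \<le> M"
      unfolding bounded_pos by force
    have bd: "\<bar>f x t - Sr t\<bar> \<le> M / (a * Gamma a) * t powr a" if t: "t \<in> {0<..T}" for t
    proof -
      from Sx[OF x t] obtain D where
        D: "has_caputo \<delta> (\<lambda>s. u x s) t D"
           "D + spatial_op p q r x t (\<lambda>i j. Uxx i j x t) (\<lambda>i. Ux i x t) (u x t) = f x t"
        by blast
      have eqx: "Ux i y t = Rx i y t" if "y \<in> \<Omega>" for i y
        using Sx[OF that t] Rx[OF that t] partial_unique by blast
      have eqxx: "Uxx i j x t = Rxx i j x t" for i j
      proof -
        have "has_partial (\<lambda>y. Ux j y t) i x (Uxx i j x t)" using Sx[OF x t] by blast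
        hence "has_partial (\<lambda>y. Rx j y t) i x (Uxx i j x t)"
          by (rule has_partial_local[OF dom(1) x, rotated]) (use eqx in auto)
        moreover have "has_partial (\<lambda>y. Rx j y t) i x (Rxx i j x t)" using Rx[OF x t] by blast
        ultimately show ?thesis by (rule partial_unique)
      qed
      have DS: "D = f x t - Sr t" using D(2) eqx[OF x] eqxx by (simp add: Sr_def)
      have at_eq: "at s within {0..T} = at s" if "s \<in> {0<..<t}" for s
        using that t by (intro at_within_interior) auto
      obtain dg where dg: "(if dbar \<delta> = 1
             then (\<forall>s\<in>{0<..<t}. ((\<lambda>s. u x s) has_real_derivative dg s) (at s))
             else (\<exists>g1. \<forall>s\<in>{0<..<t}. ((\<lambda>s. u x s) has_real_derivative g1 s) (at s) \<and>
                                       (g1 has_real_derivative dg s) (at s)))"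
        and hi: "((\<lambda>s. (t - s) powr (real (dbar \<delta>) - \<delta> - 1) * dg s)
               has_integral (Gamma (real (dbar \<delta>) - \<delta>) * D)) {0..t}"
        using D(1) unfolding has_caputo_def by blast
      have Rts: "((\<lambda>s. u x s) has_real_derivative Rt x s) (at s)" if "s \<in> {0<..<t}" for s
        using Rx[OF x, of s] that t at_eq[OF that] by auto
      have dgB: "dg s = B s" if s: "s \<in> {0<..<t}" for s
      proof (cases "dbar \<delta> = 1")
        case True
        thus ?thesis using dg s Rts[OF s] by (auto simp: B_def intro: DERIV_unique)
      next
        case False
        hence d2: "dbar \<delta> = 2" by (simp add: dbar_def split: if_splits)
        from False dg obtain g1 where g1: "\<forall>s\<in>{0<..<t}. ((\<lambda>s. u x s) has_real_derivative g1 s) (at s) \<and>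
                                       (g1 has_real_derivative dg s) (at s)" by auto
        have g1e: "g1 s' = Rt x s'" if "s' \<in> {0<..<t}" for s'
          using g1 that Rts[OF that] by (auto intro: DERIV_unique)
        have "(Rt x has_real_derivative dg s) (at s)"
          by (rule has_field_derivative_transform_within_open[of g1 _ s "{0<..<t}"]) (use g1 s g1e in auto)
        moreover have "(Rt x has_real_derivative Rtt x s) (at s)"
          using Rx[OF x, of s] s t at_eq[OF s] d2 by auto
        ultimately show ?thesis using False by (auto simp: B_def intro: DERIV_unique)
      qed
      have "\<bar>D\<bar> \<le> M / (a * Gamma a) * t powr a"
      proof (rule caputo_core[OF a _ _ _ ])
        show "0 < t" "0 \<le> M" using t M by auto
        show "((\<lambda>s. (t - s) powr (a - 1) * dg s) has_integral (Gamma a * D)) {0..t}"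
          using hi by (simp add: a_def)
        show "\<bar>dg s\<bar> \<le> M" if "s \<in> {0<..<t}" for s using dgB[OF that] M(2)[of s] that t by auto
      qed
      thus ?thesis using DS by simp
    qed
    have E0: "((\<lambda>t. f x t - Sr t) \<longlongrightarrow> 0) (at_right 0)"
    proof (rule Lim_null_comparison)
      have "eventually (\<lambda>t. t \<in> {0<..T}) (at_right (0::real))"
        unfolding eventually_at_right_field using T by (intro exI[of _ T]) auto
      thus "eventually (\<lambda>t. norm (f x t - Sr t) \<le> M / (a * Gamma a) * t powr a) (at_right 0)"
        by (rule eventually_mono) (use bd in auto)
      have "((\<lambda>t. t powr a) \<longlongrightarrow> 0) (at_right 0)"
      proof (rule tendsto_zero_powrI[OF _ tendsto_const _ a])
        show "((\<lambda>t. t) \<longlongrightarrow> (0::real)) (at_right 0)" by (rule tendsto_ident_at)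
        show "eventually (\<lambda>t. 0 \<le> t) (at_right (0::real))"
          unfolding eventually_at_right_field by (intro exI[of _ 1]) auto
      qed
      thus "((\<lambda>t. M / (a * Gamma a) * t powr a) \<longlongrightarrow> 0) (at_right 0)"
        by (rule tendsto_mult_right_zero)
    qed
    have "f x 0 - Sr 0 = 0"
      using tendsto_unique[OF _ tendsto_diff[OF flim Slim] E0] by simp
    thus "spatial_op p q r x 0 (\<lambda>i j. Pxx i j x) (\<lambda>i. Px i x) (\<phi>0 x) = f x 0"
      using phi0 xc by (simp add: Sr_def Px_def Pxx_def)
  qed
qed

end
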